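(* Let $a\in(\frac12,\frac23]$. Then the equation $\sum_{k=0}^{\varkappa_a}\delta_k(p/\lambda)^{k+1}(q/p)^{L_k}=1$ has a unique positive solution $\lambda=\lambda_a$. Moreover, there exists a constant $C>0$ such that for every $p\in(0,1)$ (with $q=1-p$), \[ \frac pa\max\big(1,(q/p)^C\big)\ \ge\ \lambda_a\ >\ p\max\big(1,(q/p)^C\big), \] and \[ L_n(x)-L_k(x)\le C(n-k+1)+1 \] for all $x\in[0,\frac1{1-a}]$ and all integers $0\le k\le n\le\varkappa_a(x)$. The first inequality for $\lambda_a$ is strict unless $a=\frac23$ and $p=\frac12$.
   Context: For $a\in[\frac12,\frac23]$ let $I_a=\big(\frac{2a-1}{1-a},1\big)$ and define $T_a$ on $[0,\frac1{1-a}]\setminus I_a$ by $T_a(x)=\frac1a(x+1)$ for $0\le x\le\frac{2a-1}{1-a}$ and $T_a(x)=\frac1a(x-1)$ for $1\le x\le\frac1{1-a}$; for $a=\frac23$ set $T_{2/3}(1)=0$. For $x\in[0,\frac1{1-a}]$ let $\varkappa_a(x)=\inf\{k\ge0:T_a^k(x)\in I_a\}$ ($\inf\emptyset=\infty$); for integers $0\le k\le\varkappa_a(x)$ put $\delta_k(x)=\mathbb 1\{T_a^k(x)<1\}$, $L_0(x)=0$, $L_k(x)=\sum_{i=0}^{k-1}\delta_i(x)$. Write $\varkappa_a=\varkappa_a(0)$, $\delta_k=\delta_k(0)$, $L_k=L_k(0)$; the sum is a series if $\varkappa_a=\infty$. Here $p\in(0,1)$, $q=1-p$ (the solution $\lambda_a$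 depends on $p$). *)

theory Defs
  imports "HOL-Analysis.Analysis" "HOL-Library.Extended_Nat"
begin

definition Ia :: "real \<Rightarrow> real set" where
  "Ia a = {(2*a - 1)/(1 - a) <..< 1}"

text \<open>The map \<open>T_a\<close>; on \<open>[0, (2a-1)/(1-a)]\<close> (minus the point 1, relevant only for a = 2/3)
  it is \<open>(x+1)/a\<close>, otherwise \<open>(x-1)/a\<close>.  This gives \<open>T_{2/3}(1) = 0\<close>.
  Values inside \<open>I_a\<close> are irrelevant (iteration stops on entering \<open>I_a\<close>).\<close>
definition Tmap :: "real \<Rightarrow> real \<Rightarrow> real" where
  "Tmap a x = (if x \<le> (2*a - 1)/(1 - a) \<and> x < 1 then (x + 1)/a else (x - 1)/a)"

definition kappa :: "real \<Rightarrow> real \<Rightarrow> enat" where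
  "kappa a x = (if \<exists>k. (Tmap a ^^ k) x \<in> Ia a
                then enat (LEAST k. (Tmap a ^^ k) x \<in> Ia a) else \<infinity>)"

definition delta :: "real \<Rightarrow> real \<Rightarrow> nat \<Rightarrow> nat" where
  "delta a x k = (if (Tmap a ^^ k) x < 1 then 1 else 0)"

definition Lcount :: "real \<Rightarrow> real \<Rightarrow> nat \<Rightarrow> nat" where
  "Lcount a x k = (\<Sum>i<k. delta a x i)"

definition lam_term :: "real \<Rightarrow> real \<Rightarrow> real \<Rightarrow> nat \<Rightarrow> real" where
  "lam_term a p lam k =
     real (delta a 0 k) * (p / lam) ^ (k + 1) * ((1 - p) / p) ^ (Lcount a 0 k)"

definition lam_eqn :: "real \<Rightarrow> real \<Rightarrow> real \<Rightarrow> bool" where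
  "lam_eqn a p lam = (case kappa a 0 of
       enat n \<Rightarrow> (\<Sum>k\<le>n. lam_term a p lam k) = 1
     | \<infinity> \<Rightarrow> lam_term a p lam sums 1)"

end

theory Submission
  imports Defs
begin

locale tm =
  fixes a :: real
  assumes a_gt: "1/2 < a" and a_le: "a \<le> 2/3"
begin

definition bb :: real where "bb = (2*a - 1)/(1 - a)"
definition zz :: real where "zz = 1/(1 - a)"

abbreviation orb :: "real \<Rightarrow> nat \<Rightarrow> real" where "orb x k \<equiv> (Tmap a ^^ k) x"

definition valid :: "real \<Rightarrow> nat \<Rightarrow> bool" where
  "valid x n \<longleftrightarrow> 0 \<le> x \<and> (\<forall>i<n. orb x i \<notin> Ia a)"

lemma a_pos: "0 < a" and a_lt1: "a < 1" using a_gt a_le by auto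

lemma bb_pos: "0 < bb" using a_gt a_le by (simp add: bb_def)
lemma bb_le1: "bb \<le> 1" using a_gt a_le by (simp add: bb_def field_simps)

lemma Ia_iff: "y \<in> Ia a \<longleftrightarrow> bb < y \<and> y < 1"
  by (simp add: Ia_def bb_def)

lemma T_left: "y < 1 \<Longrightarrow> y \<notin> Ia a \<Longrightarrow> Tmap a y = (y+1)/a"
  unfolding Tmap_def Ia_iff by (auto simp: bb_def)

lemma T_right: "1 \<le> y \<Longrightarrow> Tmap a y = (y-1)/a"
  unfolding Tmap_def by auto

lemma notin_left: "y < 1 \<Longrightarrow> y \<notin> Ia a \<Longrightarrow> y \<le> bb"
  unfolding Ia_iff by auto

lemma T_nonneg: "0 \<le> y \<Longrightarrow> y \<notin> Ia a \<Longrightarrow> 0 \<le> Tmap a y"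
proof (cases "y < 1")
  case True
  assume "0 \<le> y" "y \<notin> Ia a"
  then show ?thesis using True T_left a_pos by simp
next
  case False
  then show ?thesis using T_right a_pos by simp
qed

lemma zz_eq: "a * zz + 1 = zz" using a_lt1 by (simp add: zz_def field_simps)

lemma T_le_zz: "0 \<le> y \<Longrightarrow> y \<le> zz \<Longrightarrow> y \<notin> Ia a \<Longrightarrow> Tmap a y \<le> zz"
proof (cases "y < 1")
  case True
  assume h: "0 \<le> y" "y \<le> zz" "y \<notin> Ia a"
  have "y \<le> bb" using notin_left True h by auto
  have "bb + 1 = a * zz" using a_lt1 by (simp add: bb_def zz_def field_simps)
  then have "y + 1 \<le> a * zz" using \<open>y \<le> bb\<close> by simp
  then show ?thesis using True T_left h a_pos by (simp add: divide_le_eq mult.commute)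
next
  case False
  assume h: "0 \<le> y" "y \<le> zz" "y \<notin> Ia a"
  have "y - 1 \<le> a * zz" using zz_eq h by simp
  then show ?thesis using False T_right a_pos by (simp add: divide_le_eq mult.commute)
qed

lemma orb_add: "orb x (i+j) = orb (orb x i) j"
  by (metis add.commute comp_apply funpow_add)

lemma orb_Suc: "orb x (Suc k) = Tmap a (orb x k)" by simp

lemma delta_shift: "delta a (orb x i) j = delta a x (i+j)"
  by (simp add: delta_def orb_add)

lemma L_Suc: "Lcount a x (Suc n) = Lcount a x n + delta a x n"
  by (simp add: Lcount_def)

lemma L_0[simp]: "Lcount a x 0 = 0" by (simp add: Lcount_def)

lemma L_add: "Lcount a x (i+j) = Lcount a x i + Lcount a (orb x i) j"
  by (induction j) (simp_all add: L_Suc delta_shift)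

lemma delta_le1: "delta a x k \<le> 1" by (simp add: delta_def)

lemma L_le: "Lcount a x n \<le> n"
proof (induction n)
  case (Suc n) then show ?case using delta_le1[of x n] by (simp add: L_Suc)
qed simp

lemma orb_nonneg: "0 \<le> x \<Longrightarrow> (\<forall>j<i. orb x j \<notin> Ia a) \<Longrightarrow> 0 \<le> orb x i"
  by (induction i) (auto intro: T_nonneg)

lemma orb_le_zz: "0 \<le> x \<Longrightarrow> x \<le> zz \<Longrightarrow> (\<forall>j<i. orb x j \<notin> Ia a) \<Longrightarrow> orb x i \<le> zz"
proof (induction i)
  case 0 then show ?case by simp
next
  case (Suc i)
  then show ?case using orb_nonneg[of x i] by (auto intro!: T_le_zz)
qed

lemma valid_shift: "valid x n \<Longrightarrow> i \<le> n \<Longrightarrow> valid (orb x i) (n-i)"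
  unfolding valid_def
  by (auto simp: orb_add[symmetric] intro!: orb_nonneg)

lemma kappa_valid: "0 \<le> x \<Longrightarrow> enat n \<le> kappa a x \<Longrightarrow> valid x n"
  unfolding valid_def kappa_def
  by (auto split: if_splits) (metis not_less_Least order_less_le_trans)

lemma kappa_enat: "kappa a x = enat K \<Longrightarrow> orb x K \<in> Ia a \<and> (\<forall>i<K. orb x i \<notin> Ia a)"
  unfolding kappa_def
  by (auto split: if_splits intro: LeastI_ex dest: not_less_Least)

lemma kappa_inf: "kappa a x = \<infinity> \<Longrightarrow> orb x i \<notin> Ia a"
  unfolding kappa_def by (auto split: if_splits)

lemma zero_notin: "(0::real) \<notin> Ia a" using bb_pos by (simp add: Ia_iff)

lemma delta00: "delta a 0 0 = 1" by (simp add: delta_def)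

lemma delta_cases: "delta a x k = 0 \<or> delta a x k = 1" by (simp add: delta_def)

lemma delta_1_iff: "delta a x k = 1 \<longleftrightarrow> orb x k < 1" by (simp add: delta_def)

lemma L_zero: "(\<forall>i<j. delta a y i = 0) \<Longrightarrow> Lcount a y j = 0" by (simp add: Lcount_def)

lemma L_cong: "(\<forall>i<j. delta a y i = delta a x i) \<Longrightarrow> Lcount a y j = Lcount a x j"
  by (simp add: Lcount_def)

lemma cmp: "0 \<le> x \<Longrightarrow> (\<forall>i<j. delta a x i = delta a 0 i) \<Longrightarrow> (\<forall>i<j. orb x i \<notin> Ia a) \<Longrightarrow> orb 0 j \<le> orb x j"
proof (induction j)
  case 0 then show ?case by simp
next
  case (Suc j)
  have IH: "orb 0 j \<le> orb x j" using Suc by auto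
  have eq: "delta a x j = delta a 0 j" and nh: "orb x j \<notin> Ia a" using Suc.prems by auto
  show ?case
  proof (cases "orb x j < 1")
    case True
    then have "delta a 0 j = 1" using eq by (simp add: delta_def)
    then have "orb 0 j < 1" by (simp add: delta_def split: if_splits)
    have "orb x j \<le> bb" using notin_left True nh by auto
    then have "orb 0 j \<notin> Ia a" using IH by (simp add: Ia_iff)
    then show ?thesis using T_left[OF True nh] T_left[OF \<open>orb 0 j < 1\<close>] IH a_pos
      by (simp add: divide_right_mono)
  next
    case False
    then have "delta a 0 j = 0" using eq by (simp add: delta_def)
    then have "1 \<le> orb 0 j" by (simp add: delta_def split: if_splits)
    then show ?thesis using T_right False IH a_pos by (simp add: divide_right_mono)
  qed
qed

lemma div_point:
  assumes "valid x n" "m < n" "\<forall>i<m. delta a x i = delta a 0 i" "delta a x m \<noteq> delta a 0 m"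
  shows "delta a x m = 0 \<and> delta a 0 m = 1"
proof -
  have x0: "0 \<le> x" and nh: "\<forall>i<m. orb x i \<notin> Ia a" using assms unfolding valid_def by auto
  have "orb 0 m \<le> orb x m" using cmp[OF x0 assms(3) nh] .
  then show ?thesis using assms(4) by (auto simp: delta_def split: if_splits)
qed

lemma agree_kappa:
  assumes "valid x n" "j < n" "\<forall>i<j. delta a x i = delta a 0 i"
  shows "enat j \<le> kappa a 0"
proof (rule ccontr)
  assume "\<not> enat j \<le> kappa a 0"
  then obtain K where K: "kappa a 0 = enat K" "K < j"
    by (cases "kappa a 0") auto
  then have hK: "orb 0 K \<in> Ia a" using kappa_enat by blast
  then have "delta a 0 K = 1" by (simp add: delta_def Ia_iff)
  then have "delta a x K = 1" using assms K by auto
  then have "orb x K < 1" by (simp add: delta_def split: if_splits)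
  moreover have "orb 0 K \<le> orb x K"
  proof -
    have x0: "0 \<le> x" and nh: "\<forall>i<K. orb x i \<notin> Ia a" using assms K unfolding valid_def by auto
    have ag: "\<forall>i<K. delta a x i = delta a 0 i" using assms K by auto
    show ?thesis using cmp[OF x0 ag nh] .
  qed
  ultimately have "orb x K \<in> Ia a" using hK by (simp add: Ia_iff)
  then show False using assms K unfolding valid_def by auto
qed

definition Ones :: "nat set" where "Ones = {k. delta a 0 k = 1 \<and> enat k \<le> kappa a 0}"
definition ratio :: "nat \<Rightarrow> real" where "ratio k = real (Lcount a 0 k) / real (k+1)"
definition CC :: real where "CC = Sup (ratio ` Ones)"

lemma zero_Ones: "0 \<in> Ones"
proof -
  have "enat 0 \<le> kappa a 0" using zero_le[of "kappa a 0"] by (simp add: zero_enat_def)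
  then show ?thesis by (simp add: Ones_def delta00)
qed

lemma ratio_le1: "ratio k \<le> 1"
  using L_le[of 0 k] by (simp add: ratio_def divide_le_eq)

lemma bdd_ratio: "bdd_above (ratio ` Ones)"
  unfolding bdd_above_def using ratio_le1 by blast

lemma ratio_le_CC: "k \<in> Ones \<Longrightarrow> ratio k \<le> CC"
  unfolding CC_def by (rule cSup_upper) (auto simp: bdd_ratio)

lemma L_le_CC: "k \<in> Ones \<Longrightarrow> real (Lcount a 0 k) \<le> CC * (real k + 1)"
  using ratio_le_CC[of k] by (simp add: ratio_def divide_le_eq add.commute)

lemma decomp:
  assumes v: "valid x n" and n: "0 < n"
  shows "(\<exists>k'. k' \<in> Ones \<and> k' < n \<and> Lcount a x n = Lcount a 0 k' + 1) \<or>
         (\<exists>m. m \<in> Ones \<and> m < n \<and> Lcount a x n = Lcount a 0 m + Lcount a (orb x (Suc m)) (n - Suc m)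
              \<and> valid (orb x (Suc m)) (n - Suc m))"
proof (cases "\<exists>m. m < n \<and> delta a x m \<noteq> delta a 0 m")
  case True
  define m where "m = (LEAST m. m < n \<and> delta a x m \<noteq> delta a 0 m)"
  have hm: "m < n \<and> delta a x m \<noteq> delta a 0 m" unfolding m_def using True by (rule LeastI_ex)
  have agree: "\<forall>i<m. delta a x i = delta a 0 i"
  proof (intro allI impI)
    fix i assume i: "i < m"
    have "\<not> (i < n \<and> delta a x i \<noteq> delta a 0 i)" using i unfolding m_def by (rule not_less_Least)
    then show "delta a x i = delta a 0 i" using i hm by auto
  qed
  have dd: "delta a x m = 0 \<and> delta a 0 m = 1" using div_point[OF v] hm agree by auto
  have "enat m \<le> kappa a 0" using agree_kappa[OF v] hm agree by auto
  then have mO: "m \<in> Ones" using dd by (simp add: Ones_def)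
  have "Lcount a x n = Lcount a x (Suc m + (n - Suc m))" using hm by simp
  also have "\<dots> = Lcount a x (Suc m) + Lcount a (orb x (Suc m)) (n - Suc m)" by (rule L_add)
  also have "Lcount a x (Suc m) = Lcount a 0 m" using dd L_cong[OF agree] by (simp add: L_Suc)
  finally have "Lcount a x n = Lcount a 0 m + Lcount a (orb x (Suc m)) (n - Suc m)" .
  moreover have "valid (orb x (Suc m)) (n - Suc m)" using valid_shift[OF v Suc_leI[OF conjunct1[OF hm]]] .
  ultimately show ?thesis using mO hm by blast
next
  case False
  then have agree: "\<forall>i<n. delta a x i = delta a 0 i" by auto
  define S where "S = {k. k < n \<and> delta a 0 k = 1}"
  have fS: "finite S" and neS: "S \<noteq> {}" using n delta00 by (auto simp: S_def)
  define k' where "k' = Max S"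
  have k'S: "k' \<in> S" using fS neS Max_in k'_def by blast
  have k'max: "\<And>k. k \<in> S \<Longrightarrow> k \<le> k'" using fS k'_def by simp
  have k'n: "k' < n" and dk: "delta a 0 k' = 1" using k'S by (auto simp: S_def)
  have "enat k' \<le> kappa a 0" using agree_kappa[OF v k'n] agree k'n by auto
  then have kO: "k' \<in> Ones" using dk by (simp add: Ones_def)
  have "Lcount a x n = Lcount a 0 n" using L_cong[OF agree] .
  also have "\<dots> = Lcount a 0 (Suc k' + (n - Suc k'))" using k'n by simp
  also have "\<dots> = Lcount a 0 (Suc k') + Lcount a (orb 0 (Suc k')) (n - Suc k')" by (rule L_add)
  also have "Lcount a (orb 0 (Suc k')) (n - Suc k') = 0"
  proof (rule L_zero, intro allI impI)
    fix i assume i: "i < n - Suc k'"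
    have "Suc k' + i \<notin> S" using k'max[of "Suc k' + i"] by auto
    then have "delta a 0 (Suc k' + i) \<noteq> 1" using i by (auto simp: S_def)
    then have "delta a 0 (Suc k' + i) = 0" using delta_cases by meson
    then show "delta a (orb 0 (Suc k')) i = 0" by (simp only: delta_shift)
  qed
  finally have "Lcount a x n = Lcount a 0 k' + 1" using dk by (simp add: L_Suc)
  then show ?thesis using kO k'n by blast
qed

lemma key:
  assumes hC: "\<forall>k\<in>Ones. real (Lcount a 0 k) \<le> C0 * (real k + 1)" and C0: "0 \<le> C0"
  shows "valid x n \<Longrightarrow> real (Lcount a x n) \<le> C0 * (real n + 1) + 1"
proof (induction n arbitrary: x rule: less_induct)
  case (less n)
  show ?case
  proof (cases "n = 0")
    case True then show ?thesis using C0 by simp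
  next
    case False
    then have n: "0 < n" by simp
    from decomp[OF less.prems n] show ?thesis
    proof
      assume "\<exists>k'. k' \<in> Ones \<and> k' < n \<and> Lcount a x n = Lcount a 0 k' + 1"
      then obtain k' where k: "k' \<in> Ones" "k' < n" "Lcount a x n = Lcount a 0 k' + 1" by blast
      have "real (Lcount a 0 k') \<le> C0 * (real k' + 1)" using hC k by auto
      also have "\<dots> \<le> C0 * (real n + 1)" using k C0 by (intro mult_left_mono) auto
      finally show ?thesis using k by simp
    next
      assume "\<exists>m. m \<in> Ones \<and> m < n \<and> Lcount a x n = Lcount a 0 m + Lcount a (orb x (Suc m)) (n - Suc m)
              \<and> valid (orb x (Suc m)) (n - Suc m)"
      then obtain m where m: "m \<in> Ones" "m < n"
        "Lcount a x n = Lcount a 0 m + Lcount a (orb x (Suc m)) (n - Suc m)"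
        "valid (orb x (Suc m)) (n - Suc m)" by blast
      have 1: "real (Lcount a 0 m) \<le> C0 * (real m + 1)" using hC m by auto
      have 2: "real (Lcount a (orb x (Suc m)) (n - Suc m)) \<le> C0 * (real (n - Suc m) + 1) + 1"
        using less.IH[of "n - Suc m"] m n by auto
      have "real (n - Suc m) = real n - real m - 1" using m by auto
      then show ?thesis using 1 2 m(3) by (simp add: algebra_simps)
    qed
  qed
qed

end

context tm
begin

lemma orb0_1: "orb 0 (Suc 0) = 1/a"
  using T_left[of 0] zero_notin by simp

lemma valid_mono: "valid x n \<Longrightarrow> m \<le> n \<Longrightarrow> valid x m"
  unfolding valid_def by auto

lemma exists_one: "\<exists>k. k \<in> Ones \<and> 0 < k"
proof (cases "kappa a 0")
  case (enat K)
  then have h: "orb 0 K \<in> Ia a" using kappa_enat by blast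
  then have "delta a 0 K = 1" by (simp add: delta_def Ia_iff)
  moreover have "K \<noteq> 0" using h zero_notin by (cases K) auto
  ultimately show ?thesis using enat by (auto simp: Ones_def)
next
  case infinity
  show ?thesis
  proof (rule ccontr)
    assume "\<not> ?thesis"
    then have no: "\<And>k. 0 < k \<Longrightarrow> delta a 0 k \<noteq> 1" using infinity by (auto simp: Ones_def)
    have ge1: "1 \<le> orb 0 k" if "0 < k" for k
      using no[OF that] delta_1_iff[of 0 k] by (simp add: not_less)
    define d where "d k = zz - orb 0 k" for k
    have d1: "d (Suc 0) = zz - 1/a" unfolding d_def orb0_1 ..
    have d1pos: "0 < d (Suc 0)"
    proof -
      have "1/a < 1/(1-a)" using a_gt a_le by (simp add: field_simps)
      then show ?thesis using d1 by (simp add: zz_def)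
    qed
    have dn: "d (Suc n) = d (Suc 0) * (1/a)^n" for n
    proof (induction n)
      case 0 then show ?case by simp
    next
      case (Suc n)
      have "orb 0 (Suc (Suc n)) = (orb 0 (Suc n) - 1)/a" using T_right ge1[of "Suc n"] by simp
      then have "d (Suc (Suc n)) = zz - (orb 0 (Suc n) - 1)/a" by (simp add: d_def)
      also have "\<dots> = (a*zz + 1 - orb 0 (Suc n))/a" using a_pos by (simp add: field_simps)
      also have "\<dots> = d (Suc n) / a" using zz_eq by (simp add: d_def)
      finally show ?case using Suc by (simp add: field_simps)
    qed
    have "1 < 1/a" using a_lt1 a_pos by simp
    then obtain n where n: "zz / d (Suc 0) < (1/a)^n" using real_arch_pow by blast
    then have "zz < d (Suc 0) * (1/a)^n" using d1pos by (simp add: field_simps)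
    then have "zz < d (Suc n)" using dn[of n] by linarith
    moreover have "d (Suc n) \<le> zz - 1" using ge1[of "Suc n"] by (simp add: d_def)
    ultimately show False by simp
  qed
qed

lemma L0_ge1: "0 < k \<Longrightarrow> 1 \<le> Lcount a 0 k"
proof -
  assume "0 < k"
  then have "Lcount a 0 k = Lcount a 0 (Suc 0 + (k - 1))" by simp
  also have "\<dots> = Lcount a 0 (Suc 0) + Lcount a (orb 0 (Suc 0)) (k - 1)" by (rule L_add)
  finally show ?thesis by (simp add: L_Suc delta00)
qed

lemma CC_pos: "0 < CC"
proof -
  obtain k where k: "k \<in> Ones" "0 < k" using exists_one by blast
  have "0 < ratio k" using L0_ge1[OF k(2)] by (simp add: ratio_def)
  then show ?thesis using ratio_le_CC[OF k(1)] by simp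
qed

definition ff :: "nat \<Rightarrow> real" where "ff k = CC * (real k + 1) - real (Lcount a 0 k)"
definition Def :: "real \<Rightarrow> nat \<Rightarrow> real" where "Def x n = CC * (real n + 1) + 1 - real (Lcount a x n)"

lemma ff_nonneg: "k \<in> Ones \<Longrightarrow> 0 \<le> ff k" using L_le_CC by (simp add: ff_def)

lemma Def_nonneg: "valid x n \<Longrightarrow> 0 \<le> Def x n"
  using key[of CC x n] L_le_CC CC_pos by (simp add: Def_def)

lemma refined:
  assumes phi: "0 < \<phi>" "\<forall>k\<in>Ones. \<phi> \<le> ff k"
    and M: "\<forall>k\<in>Ones. ff k \<le> B0 \<longrightarrow> k \<le> M"
  shows "\<forall>n x. valid x n \<longrightarrow> Def x n \<le> B0 \<longrightarrow> Def x n < real j * \<phi> \<longrightarrow>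
            real n \<le> real j * (real M + 1 + B0 / CC)"
proof (induction j)
  case 0
  show ?case
  proof (intro allI impI)
    fix n x assume "valid x n" "Def x n < real 0 * \<phi>"
    then show "real n \<le> real 0 * (real M + 1 + B0 / CC)" using Def_nonneg[of x n] by simp
  qed
next
  case (Suc j)
  show ?case
  proof (intro allI impI)
    fix n x assume v: "valid x n" and h1: "Def x n \<le> B0" and h2: "Def x n < real (Suc j) * \<phi>"
    have B0: "0 \<le> B0" using Def_nonneg[OF v] h1 by simp
    have Q: "0 \<le> real M + 1 + B0 / CC" using B0 CC_pos by simp
    show "real n \<le> real (Suc j) * (real M + 1 + B0 / CC)"
    proof (cases "n = 0")
      case True then show ?thesis using Q by simp
    next
      case False
      then have n: "0 < n" by simp
      from decomp[OF v n] show ?thesis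
      proof
        assume "\<exists>k'. k' \<in> Ones \<and> k' < n \<and> Lcount a x n = Lcount a 0 k' + 1"
        then obtain k where k: "k \<in> Ones" "k < n" "Lcount a x n = Lcount a 0 k + 1" by blast
        have eq: "Def x n = ff k + CC * (real n - real k)"
          using k by (simp add: Def_def ff_def algebra_simps)
        have "0 \<le> CC * (real n - real k)" using k CC_pos by simp
        then have "ff k \<le> B0" using eq h1 by simp
        then have kM: "k \<le> M" using M k by auto
        have "CC * (real n - real k) \<le> B0" using eq h1 ff_nonneg[OF k(1)] by simp
        then have "real n - real k \<le> B0 / CC" using CC_pos by (simp add: field_simps)
        then have "real n \<le> real M + B0 / CC" using kM by linarith
        also have "\<dots> \<le> 1 * (real M + 1 + B0/CC)" by simp
        also have "\<dots> \<le> real (Suc j) * (real M + 1 + B0 / CC)"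
          using Q by (intro mult_right_mono) auto
        finally show ?thesis .
      next
        assume "\<exists>m. m \<in> Ones \<and> m < n \<and> Lcount a x n = Lcount a 0 m + Lcount a (orb x (Suc m)) (n - Suc m)
              \<and> valid (orb x (Suc m)) (n - Suc m)"
        then obtain m where m: "m \<in> Ones" "m < n"
          "Lcount a x n = Lcount a 0 m + Lcount a (orb x (Suc m)) (n - Suc m)"
          "valid (orb x (Suc m)) (n - Suc m)" by blast
        define y where "y = orb x (Suc m)"
        have rn: "real (n - Suc m) = real n - real m - 1" using m by auto
        have eq: "Def x n = ff m + Def y (n - Suc m)"
          using m(3) rn by (simp add: Def_def ff_def y_def algebra_simps)
        have Dy: "0 \<le> Def y (n - Suc m)" using Def_nonneg m(4) by (simp add: y_def)
        have "ff m \<le> B0" using eq Dy h1 by simp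
        then have mM: "m \<le> M" using M m by auto
        have "\<phi> \<le> ff m" using phi m by auto
        then have "Def y (n - Suc m) < real j * \<phi>" using eq h2 by (simp add: algebra_simps)
        moreover have "Def y (n - Suc m) \<le> B0" using eq h1 ff_nonneg[OF m(1)] by simp
        ultimately have "real (n - Suc m) \<le> real j * (real M + 1 + B0 / CC)"
          using Suc.IH m(4) unfolding y_def by blast
        then have "real n \<le> real j * (real M + 1 + B0 / CC) + real M + 1" using rn mM by linarith
        also have "\<dots> \<le> real j * (real M + 1 + B0 / CC) + (real M + 1 + B0/CC)"
          using B0 CC_pos by simp
        also have "\<dots> = real (Suc j) * (real M + 1 + B0 / CC)" by (simp add: algebra_simps add_divide_distrib)
        finally show ?thesis .
      qed
    qed
  qed
qed

end

context tm
begin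

lemma ff0: "ff 0 = CC" by (simp add: ff_def)

lemma ratio_ff: "ratio k = CC - ff k / (real k + 1)"
  by (simp add: ratio_def ff_def field_simps)

lemma hard:
  assumes r: "1 < r"
  shows "\<exists>F. finite F \<and> F \<subseteq> Ones \<and> 1 < (\<Sum>k\<in>F. r powr (- ff k))"
proof (rule ccontr)
  assume "\<not> ?thesis"
  then have hyp: "\<And>F. finite F \<Longrightarrow> F \<subseteq> Ones \<Longrightarrow> (\<Sum>k\<in>F. r powr (- ff k)) \<le> 1"
    by (auto simp: not_less)
  have pos: "0 < ff k" if k: "k \<in> Ones" for k
  proof (cases "k = 0")
    case True then show ?thesis using ff0 CC_pos by simp
  next
    case False
    have "(\<Sum>i\<in>{0,k}. r powr (- ff i)) \<le> 1" using hyp[of "{0,k}"] k zero_Ones by auto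
    then have "r powr (- CC) + r powr (- ff k) \<le> 1" using False ff0 by simp
    moreover have "0 < r powr (- CC)" using r by simp
    ultimately have lt: "r powr (- ff k) < 1" by linarith
    show ?thesis
    proof (rule ccontr)
      assume "\<not> 0 < ff k"
      then have "1 \<le> r powr (- ff k)" using r by (intro ge_one_powr_ge_zero) auto
      then show False using lt by simp
    qed
  qed
  have fin: "finite {k\<in>Ones. ff k \<le> B}" for B
  proof -
    have "finite {k\<in>Ones. ff k \<le> B} \<and> card {k\<in>Ones. ff k \<le> B} \<le> nat \<lceil>r powr B\<rceil>"
    proof (rule finite_if_finite_subsets_card_bdd)
      fix G assume G: "G \<subseteq> {k\<in>Ones. ff k \<le> B}" "finite G"
      have "real (card G) * r powr (- B) = (\<Sum>k\<in>G. r powr (-B))" by simp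
      also have "\<dots> \<le> (\<Sum>k\<in>G. r powr (- ff k))"
        using G r by (intro sum_mono powr_mono) auto
      also have "\<dots> \<le> 1" using hyp G by auto
      finally have "real (card G) * r powr (-B) \<le> 1" .
      then have "real (card G) \<le> r powr B" using r by (simp add: powr_minus field_simps)
      also have "\<dots> \<le> real_of_int \<lceil>r powr B\<rceil>" by simp
      finally have "int (card G) \<le> \<lceil>r powr B\<rceil>" by linarith
      then show "card G \<le> nat \<lceil>r powr B\<rceil>" by linarith
    qed
    then show ?thesis by blast
  qed
  define SC where "SC = {k\<in>Ones. ff k \<le> CC}"
  have fSC: "finite SC" using fin by (simp add: SC_def)
  have SC0: "0 \<in> SC" using zero_Ones ff0 by (simp add: SC_def)
  define \<phi> where "\<phi> = Min (ff ` SC)"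
  have phipos: "0 < \<phi>"
  proof -
    have "\<phi> \<in> ff ` SC" unfolding \<phi>_def using fSC SC0 by (intro Min_in) auto
    then show ?thesis using pos by (auto simp: SC_def)
  qed
  have phile: "\<forall>k\<in>Ones. \<phi> \<le> ff k"
  proof
    fix k assume k: "k \<in> Ones"
    have p0: "\<phi> \<le> ff 0" unfolding \<phi>_def using fSC SC0 by (intro Min_le) auto
    show "\<phi> \<le> ff k"
    proof (cases "ff k \<le> CC")
      case True then have "k \<in> SC" using k by (simp add: SC_def)
      then show ?thesis unfolding \<phi>_def using fSC by (intro Min_le) auto
    next
      case False then show ?thesis using p0 ff0 by simp
    qed
  qed
  show False
  proof (cases "\<forall>n. \<exists>x. valid x n \<and> CC * real n \<le> real (Lcount a x n)")
    case True
    define B0 where "B0 = CC + 1"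
    obtain M where M: "\<forall>k\<in>{k\<in>Ones. ff k \<le> B0}. k \<le> M"
      using fin[of B0] finite_nat_set_iff_bounded_le by blast
    then have M': "\<forall>k\<in>Ones. ff k \<le> B0 \<longrightarrow> k \<le> M" by auto
    obtain j where j: "B0 < real j * \<phi>" using ex_less_of_nat_mult[OF phipos] by blast
    define N where "N = real j * (real M + 1 + B0 / CC)"
    define n where "n = nat \<lceil>N\<rceil> + 1"
    have nN: "N < real n" using real_nat_ceiling_ge[of N] by (simp add: n_def)
    obtain x where x: "valid x n" "CC * real n \<le> real (Lcount a x n)" using True by blast
    have D: "Def x n \<le> B0" using x by (simp add: Def_def B0_def algebra_simps)
    have D2: "Def x n < real j * \<phi>" using D j by simp
    have "real n \<le> N" using refined[OF phipos phile M', of j] x(1) D D2 by (simp add: N_def)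
    then show False using nN by simp
  next
    case False
    then obtain n0 where n0: "\<And>x. valid x n0 \<Longrightarrow> real (Lcount a x n0) < CC * real n0"
      by (auto simp: not_le)
    have "valid 0 0" by (simp add: valid_def)
    then have n0pos: "0 < n0" using n0[of 0] by (cases n0) auto
    define l0 where "l0 = real_of_int (\<lceil>CC * real n0\<rceil> - 1)"
    have l0lt: "l0 < CC * real n0"
      using less_ceiling_iff[of "\<lceil>CC * real n0\<rceil> - 1" "CC * real n0"] by (simp add: l0_def)
    have "0 < CC * real n0" using CC_pos n0pos by simp
    then have "0 < \<lceil>CC * real n0\<rceil>" using less_ceiling_iff[of 0 "CC * real n0"] by simp
    then have l0nn: "0 \<le> l0" by (simp add: l0_def)
    have Lbd: "real (Lcount a x n0) \<le> l0" if "valid x n0" for x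
    proof -
      have "real (Lcount a x n0) < CC * real n0" using n0 that by blast
      then have "int (Lcount a x n0) < \<lceil>CC * real n0\<rceil>"
        using less_ceiling_iff[of "int (Lcount a x n0)" "CC * real n0"] by simp
      then have "int (Lcount a x n0) \<le> \<lceil>CC * real n0\<rceil> - 1" by linarith
      then show ?thesis unfolding l0_def by linarith
    qed
    have block: "valid x (t*n0) \<Longrightarrow> real (Lcount a x (t*n0)) \<le> real t * l0" for t x
    proof (induction t arbitrary: x)
      case 0 then show ?case by simp
    next
      case (Suc t)
      have v1: "valid x n0" using valid_mono[OF Suc.prems] by simp
      have v2: "valid (orb x n0) (t*n0)" using valid_shift[OF Suc.prems, of n0] by simp
      have "Lcount a x (Suc t * n0) = Lcount a x n0 + Lcount a (orb x n0) (t*n0)"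
        using L_add[of x n0 "t*n0"] by simp
      then show ?case using Lbd[OF v1] Suc.IH[OF v2] by (simp add: algebra_simps)
    qed
    have Lk: "real (Lcount a 0 k) \<le> real k / real n0 * l0 + real n0" if k: "k \<in> Ones" for k
    proof -
      define t where "t = k div n0"
      define s where "s = k mod n0"
      have ks: "k = t*n0 + s" by (simp add: t_def s_def)
      have vk: "valid 0 k" using k kappa_valid by (simp add: Ones_def)
      have vt: "valid 0 (t*n0)" using valid_mono[OF vk] ks by simp
      have "Lcount a 0 k = Lcount a 0 (t*n0) + Lcount a (orb 0 (t*n0)) s" using ks L_add by simp
      moreover have "Lcount a (orb 0 (t*n0)) s \<le> s" by (rule L_le)
      moreover have "s < n0" using n0pos by (simp add: s_def)
      moreover have "real t \<le> real k / real n0" unfolding t_def by (rule of_nat_div_le_of_nat)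
      ultimately show ?thesis using block[OF vt] l0nn mult_right_mono[of "real t" "real k / real n0" l0]
        by linarith
    qed
    define \<epsilon> where "\<epsilon> = CC - l0 / real n0"
    have epos: "0 < \<epsilon>" using l0lt n0pos by (simp add: \<epsilon>_def field_simps)
    have ffk: "\<epsilon> * real k - real n0 \<le> ff k" if k: "k \<in> Ones" for k
    proof -
      have "real k / real n0 * l0 = real k * (l0 / real n0)" by simp
      then show ?thesis using Lk[OF k] CC_pos by (simp add: ff_def \<epsilon>_def algebra_simps)
    qed
    define K1 where "K1 = 2 * real n0 / \<epsilon> + 2"
    have "0 \<le> 2 * real n0 / \<epsilon>" using epos by simp
    then have K1pos: "0 < K1" by (simp add: K1_def)
    define \<eta> where "\<eta> = min (\<epsilon>/2) (\<phi> / K1)"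
    have etapos: "0 < \<eta>" using epos phipos K1pos by (simp add: \<eta>_def)
    have rat: "ratio k \<le> CC - \<eta>" if k: "k \<in> Ones" for k
    proof -
      have "\<eta> \<le> ff k / (real k + 1)"
      proof (cases "K1 \<le> real k + 1")
        case True
        have "2 * real n0 / \<epsilon> + 1 \<le> real k" using True by (simp add: K1_def)
        then have "2 * real n0 + \<epsilon> \<le> \<epsilon> * real k" using epos by (simp add: field_simps)
        then have "\<epsilon> / 2 * (real k + 1) \<le> ff k" using ffk[OF k] by (simp add: algebra_simps)
        then have "\<epsilon> / 2 \<le> ff k / (real k + 1)" by (simp add: field_simps)
        moreover have "\<eta> \<le> \<epsilon> / 2" unfolding \<eta>_def by (rule min.cobounded1)
        ultimately show ?thesis by linarith
      next
        case False
        have "\<phi> / K1 \<le> \<phi> / (real k + 1)" using False phipos by (intro divide_left_mono) auto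
        also have "\<dots> \<le> ff k / (real k + 1)" using phile k by (intro divide_right_mono) auto
        moreover have "\<eta> \<le> \<phi> / K1" unfolding \<eta>_def by (rule min.cobounded2)
        ultimately show ?thesis by linarith
      qed
      then show ?thesis using ratio_ff[of k] by simp
    qed
    have "CC \<le> CC - \<eta>" unfolding CC_def[of] using zero_Ones rat
      by (intro cSup_least) (auto simp: CC_def)
    then show False using etapos by simp
  qed
qed

end

context tm
begin

definition ss :: real where "ss = a / (2*(1-a))"

lemma ss_le1: "ss \<le> 1" using a_le a_lt1 by (simp add: ss_def field_simps)
lemma ss_lt1: "a < 2/3 \<Longrightarrow> ss < 1" using a_lt1 by (simp add: ss_def field_simps)

lemma partial_a:
  "valid 0 n \<Longrightarrow> (\<Sum>k<n. real (delta a 0 k) * a^(k+1)) = ss * (1 - a^n) + a^(n+1) * orb 0 n / 2"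
proof (induction n)
  case 0 then show ?case by simp
next
  case (Suc n)
  have v: "valid 0 n" using valid_mono[OF Suc.prems] by simp
  have nh: "orb 0 n \<notin> Ia a" using Suc.prems by (simp add: valid_def)
  have IH: "(\<Sum>k<n. real (delta a 0 k) * a^(k+1)) = ss * (1 - a^n) + a^(n+1) * orb 0 n / 2"
    using Suc.IH[OF v] .
  have key1: "ss * a^n * (1 - a) = a^(n+1) / 2" using a_lt1 by (simp add: ss_def field_simps)
  show ?case
  proof (cases "orb 0 n < 1")
    case True
    then have d: "delta a 0 n = 1" by (simp add: delta_def)
    have o: "orb 0 (Suc n) = (orb 0 n + 1)/a" using T_left[OF True nh] by simp
    have e: "a * orb 0 (Suc n) = orb 0 n + 1" using o a_pos by (simp add: field_simps)
    have "a^(Suc n + 1) * orb 0 (Suc n) = a^(n+1) * (a * orb 0 (Suc n))" by (simp add: mult_ac)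
    also have "\<dots> = a^(n+1) * (orb 0 n + 1)" by (simp only: e)
    finally have "a^(Suc n + 1) * orb 0 (Suc n) = a^(n+1) * (orb 0 n + 1)" .
    have f0: "(\<Sum>k<Suc n. real (delta a 0 k) * a^(k+1)) = (\<Sum>k<n. real (delta a 0 k) * a^(k+1)) + a^(n+1)"
      using d by simp
    have f2: "ss * (1 - a^n) = ss - ss * a^n" by (simp add: algebra_simps)
    have f3: "ss * (1 - a^(Suc n)) = ss - ss * a^(Suc n)" by (simp add: algebra_simps)
    have f4: "ss * a^n - ss * a^(Suc n) = a^(n+1) / 2" using key1 by (simp add: algebra_simps)
    have f5: "a^(Suc n + 1) * orb 0 (Suc n) = a^(n+1) * orb 0 n + a^(n+1)"
      using \<open>a^(Suc n + 1) * orb 0 (Suc n) = a^(n+1) * (orb 0 n + 1)\<close> by (simp only: distrib_left mult_1_right)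
    show ?thesis using f0 f2 f3 f4 f5 IH by argo
  next
    case False
    then have d: "delta a 0 n = 0" by (simp add: delta_def)
    have o: "orb 0 (Suc n) = (orb 0 n - 1)/a" using T_right False by simp
    have e: "a * orb 0 (Suc n) = orb 0 n - 1" using o a_pos by (simp add: field_simps)
    have "a^(Suc n + 1) * orb 0 (Suc n) = a^(n+1) * (a * orb 0 (Suc n))" by (simp add: mult_ac)
    also have "\<dots> = a^(n+1) * (orb 0 n - 1)" by (simp only: e)
    finally have "a^(Suc n + 1) * orb 0 (Suc n) = a^(n+1) * (orb 0 n - 1)" .
    have f0: "(\<Sum>k<Suc n. real (delta a 0 k) * a^(k+1)) = (\<Sum>k<n. real (delta a 0 k) * a^(k+1))"
      using d by simp
    have f2: "ss * (1 - a^n) = ss - ss * a^n" by (simp add: algebra_simps)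
    have f3: "ss * (1 - a^(Suc n)) = ss - ss * a^(Suc n)" by (simp add: algebra_simps)
    have f4: "ss * a^n - ss * a^(Suc n) = a^(n+1) / 2" using key1 by (simp add: algebra_simps)
    have f5: "a^(Suc n + 1) * orb 0 (Suc n) = a^(n+1) * orb 0 n - a^(n+1)"
      using \<open>a^(Suc n + 1) * orb 0 (Suc n) = a^(n+1) * (orb 0 n - 1)\<close> by (simp only: right_diff_distrib mult_1_right)
    show ?thesis using f0 f2 f3 f4 f5 IH by argo
  qed
qed

lemma summable_a: "summable (\<lambda>k. real (delta a 0 k) * a^(k+1))"
proof (rule summable_comparison_test')
  show "summable (\<lambda>k. a * a^k)" using a_pos a_lt1 by (intro summable_mult summable_geometric) simp
  fix k :: nat
  show "norm (real (delta a 0 k) * a^(k+1)) \<le> a * a^k"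
    using delta_le1[of 0 k] a_pos by (cases "delta a 0 k = 0") (auto simp: delta_def)
qed

lemma suminf_a_inf:
  assumes "kappa a 0 = \<infinity>"
  shows "(\<Sum>k. real (delta a 0 k) * a^(k+1)) \<le> ss"
proof (rule suminf_le_const[OF summable_a])
  fix n
  have v: "valid 0 n" using kappa_valid assms by simp
  have "orb 0 n \<le> zz" using orb_le_zz[of 0 n] v by (simp add: valid_def zz_def a_lt1 less_imp_le)
  then have "a^(n+1) * orb 0 n / 2 \<le> a^(n+1) * zz / 2" using a_pos by (simp add: mult_left_mono)
  also have "a^(n+1) * zz / 2 = ss * a^n" using a_lt1 by (simp add: ss_def zz_def field_simps)
  finally show "(\<Sum>k<n. real (delta a 0 k) * a^(k+1)) \<le> ss"
    using partial_a[OF v] by (simp add: algebra_simps)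
qed

lemma sum_a_fin:
  assumes K: "kappa a 0 = enat K"
  shows "(\<Sum>k\<le>K. real (delta a 0 k) * a^(k+1)) < 1"
proof -
  have hK: "orb 0 K \<in> Ia a" and nh: "\<forall>i<K. orb 0 i \<notin> Ia a" using kappa_enat[OF K] by auto
  have v: "valid 0 K" using nh by (simp add: valid_def)
  have dK: "delta a 0 K = 1" using hK by (simp add: delta_def Ia_iff)
  have x1: "orb 0 K < 1" using hK by (simp add: Ia_iff)
  define t where "t = a^K"
  have t: "0 < t" "t \<le> 1" using a_pos a_lt1 by (auto simp: t_def power_le_one)
  have "(\<Sum>k\<le>K. real (delta a 0 k) * a^(k+1)) = (\<Sum>k<K. real (delta a 0 k) * a^(k+1)) + a^(K+1)"
    using dK by (simp add: lessThan_Suc_atMost[symmetric])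
  also have "\<dots> = ss * (1 - t) + a * t * orb 0 K / 2 + a * t" using partial_a[OF v] by (simp add: t_def)
  also have "\<dots> < ss * (1 - t) + a * t / 2 + a * t"
    using x1 t a_pos by (simp add: mult_strict_left_mono)
  also have "\<dots> \<le> (1 - t) + t"
  proof -
    have "ss * (1 - t) \<le> 1 * (1 - t)" using ss_le1 t by (intro mult_right_mono) auto
    moreover have "a * t / 2 + a * t \<le> t" using a_le t by (simp add: field_simps)
    ultimately show ?thesis by simp
  qed
  finally show ?thesis by simp
qed

lemma powr_nat1: "0 < x \<Longrightarrow> x powr (c * (real k + 1)) = (x powr c)^(k+1)"
proof -
  assume x: "0 < x"
  have "(x powr c)^(k+1) = (x powr c) powr (real (k+1))" using x by (simp only: powr_realpow powr_gt_zero)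
  also have "\<dots> = x powr (c * real (k+1))" by (rule powr_powr)
  also have "real (k+1) = real k + 1" by simp
  finally show ?thesis by simp
qed

definition gg :: "real \<Rightarrow> real \<Rightarrow> nat \<Rightarrow> real" where
  "gg r u k = real (delta a 0 k) * u^(k+1) * r^(Lcount a 0 k)"

definition Mx :: "real \<Rightarrow> real" where "Mx r = max 1 (r powr CC)"

lemma Mx_ge1: "1 \<le> Mx r" by (simp add: Mx_def)

lemma gg0: "gg r u 0 = u" by (simp add: gg_def delta00)

lemma gg_nonneg: "0 \<le> r \<Longrightarrow> 0 \<le> u \<Longrightarrow> 0 \<le> gg r u k" by (simp add: gg_def)

lemma gg_mono: "0 \<le> r \<Longrightarrow> 0 \<le> u \<Longrightarrow> u \<le> v \<Longrightarrow> gg r u k \<le> gg r v k"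
  unfolding gg_def by (intro mult_right_mono mult_left_mono power_mono) auto

lemma rpow_le:
  assumes r: "0 < r" and k: "k \<in> Ones"
  shows "r^(Lcount a 0 k) \<le> Mx r ^ (k+1)"
proof (cases "r \<le> 1")
  case True
  then have "r^(Lcount a 0 k) \<le> 1" using r by (simp add: power_le_one)
  also have "1 \<le> Mx r ^ (k+1)" by (intro one_le_power Mx_ge1)
  finally show ?thesis .
next
  case False
  have "r^(Lcount a 0 k) = r powr (real (Lcount a 0 k))" using r by (simp add: powr_realpow)
  also have "\<dots> \<le> r powr (CC * (real k + 1))" using L_le_CC[OF k] False by (intro powr_mono) auto
  also have "\<dots> = (r powr CC)^(k+1)" using r by (rule powr_nat1)
  also have "\<dots> \<le> Mx r ^ (k+1)" by (intro power_mono) (auto simp: Mx_def)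
  finally show ?thesis .
qed

lemma gg_le_geom:
  assumes r: "0 < r" and k: "enat k \<le> kappa a 0" and u: "0 \<le> u"
  shows "gg r u k \<le> (u * Mx r)^(k+1)"
proof (cases "delta a 0 k = 1")
  case True
  then have kO: "k \<in> Ones" using k by (simp add: Ones_def)
  have "gg r u k = u^(k+1) * r^(Lcount a 0 k)" using True by (simp add: gg_def)
  also have "\<dots> \<le> u^(k+1) * Mx r^(k+1)" using rpow_le[OF r kO] u by (intro mult_left_mono) auto
  finally show ?thesis by (simp only: power_mult_distrib)
next
  case False
  then have "delta a 0 k = 0" using delta_cases by meson
  moreover have "0 \<le> u * Mx r" using u Mx_ge1[of r] by simp
  ultimately show ?thesis using zero_le_power[of "u * Mx r" "k+1"] by (simp add: gg_def del: power_Suc)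
qed

lemma gg_le_a:
  assumes r: "0 < r" and k: "enat k \<le> kappa a 0"
  shows "gg r (a / Mx r) k \<le> real (delta a 0 k) * a^(k+1)"
proof -
  have e: "a / Mx r * Mx r = a" using Mx_ge1[of r] by simp
  have "gg r (a / Mx r) k \<le> (a / Mx r * Mx r)^(k+1)"
    using a_pos Mx_ge1[of r] by (intro gg_le_geom[OF r k]) simp
  also have "(a / Mx r * Mx r)^(k+1) = a^(k+1)" by (simp only: e)
  finally have h: "gg r (a / Mx r) k \<le> a^(k+1)" .
  show ?thesis
  proof (cases "delta a 0 k = 1")
    case True then show ?thesis using h by simp
  next
    case False
    then have "delta a 0 k = 0" using delta_cases by meson
    then show ?thesis by (simp add: gg_def)
  qed
qed

lemma LB:
  assumes r: "0 < r"
  shows "\<exists>F. finite F \<and> F \<subseteq> Ones \<and> 1 < (\<Sum>k\<in>F. gg r (1 / Mx r) k)"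
proof (cases "r \<le> 1")
  case True
  have "r powr CC \<le> 1" using True r CC_pos by (intro powr_le1) auto
  then have M1: "Mx r = 1" by (simp add: Mx_def)
  obtain k1 where k1: "k1 \<in> Ones" "0 < k1" using exists_one by blast
  have d1: "delta a 0 k1 = 1" using k1 by (simp add: Ones_def)
  have "(\<Sum>k\<in>{0,k1}. gg r (1 / Mx r) k) = 1 + r^(Lcount a 0 k1)"
    using k1 d1 M1 by (simp add: gg_def delta00)
  moreover have "0 < r^(Lcount a 0 k1)" using r by simp
  ultimately show ?thesis using k1 zero_Ones by (intro exI[of _ "{0,k1}"]) auto
next
  case False
  then have r1: "1 < r" by simp
  have "1 \<le> r powr CC" using r1 CC_pos by (intro ge_one_powr_ge_zero) auto
  then have M: "Mx r = r powr CC" by (simp add: Mx_def)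
  obtain F where F: "finite F" "F \<subseteq> Ones" "1 < (\<Sum>k\<in>F. r powr (- ff k))" using hard[OF r1] by blast
  have "r powr (- ff k) = gg r (1 / Mx r) k" if k: "k \<in> Ones" for k
  proof -
    have d: "delta a 0 k = 1" using k by (simp add: Ones_def)
    have "r powr (- ff k) = r powr (real (Lcount a 0 k) - CC * (real k + 1))" by (simp add: ff_def algebra_simps)
    also have "\<dots> = r powr (real (Lcount a 0 k)) / r powr (CC * (real k + 1))" by (rule powr_diff)
    also have "r powr (CC * (real k + 1)) = (r powr CC)^(k+1)" using r by (rule powr_nat1)
    also have "r powr (real (Lcount a 0 k)) = r^(Lcount a 0 k)" using r by (simp add: powr_realpow)
    finally show ?thesis using d M by (simp add: gg_def power_one_over field_simps)
  qed
  then have "(\<Sum>k\<in>F. r powr (- ff k)) = (\<Sum>k\<in>F. gg r (1 / Mx r) k)" using F by (intro sum.cong) auto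
  then show ?thesis using F by auto
qed

end

context tm
begin

definition sol :: "real \<Rightarrow> real \<Rightarrow> bool" where
  "sol r u = (case kappa a 0 of enat K \<Rightarrow> (\<Sum>k\<le>K. gg r u k) = 1 | \<infinity> \<Rightarrow> gg r u sums 1)"

definition cc :: "real \<Rightarrow> nat \<Rightarrow> real" where
  "cc r k = real (delta a 0 k) * r^(Lcount a 0 k)"

definition PS :: "real \<Rightarrow> real \<Rightarrow> real" where
  "PS r u = (\<Sum>k. cc r k * u^k)"

lemma gg_cc: "gg r u k = u * (cc r k * u^k)"
  by (simp add: gg_def cc_def algebra_simps)

lemma Mx_pos: "0 < Mx r" using Mx_ge1[of r] by simp

lemma aMx_lt: "a / Mx r < 1 / Mx r" using a_lt1 Mx_pos[of r] by (simp add: divide_strict_right_mono)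

lemma aMx_pos: "0 < a / Mx r" using a_pos Mx_pos[of r] by simp

context
  fixes r :: real
  assumes r: "0 < r" and kinf: "kappa a 0 = \<infinity>"
begin

lemma summable_cc:
  assumes u: "0 \<le> u" "u < 1 / Mx r"
  shows "summable (\<lambda>k. cc r k * u^k)"
proof (rule summable_comparison_test')
  have q: "u * Mx r < 1" using u Mx_pos[of r] by (simp add: field_simps)
  show "summable (\<lambda>k. Mx r * (u * Mx r)^k)"
    using q u Mx_pos[of r] by (intro summable_mult summable_geometric) simp
  fix k :: nat
  have "0 \<le> cc r k * u^k" using r u by (simp add: cc_def)
  moreover have "cc r k * u^k \<le> Mx r * (u * Mx r)^k"
  proof (cases "delta a 0 k = 1")
    case True
    then have kO: "k \<in> Ones" using kinf by (simp add: Ones_def)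
    have "cc r k * u^k = r^(Lcount a 0 k) * u^k" using True by (simp add: cc_def)
    also have "\<dots> \<le> Mx r^(k+1) * u^k" using rpow_le[OF r kO] u by (intro mult_right_mono) auto
    also have "\<dots> = Mx r * (u * Mx r)^k" by (simp add: power_mult_distrib)
    finally show ?thesis .
  next
    case False
    then have "delta a 0 k = 0" using delta_cases by meson
    then show ?thesis using u Mx_pos[of r] by (simp add: cc_def)
  qed
  ultimately show "norm (cc r k * u^k) \<le> Mx r * (u * Mx r)^k" by simp
qed

lemma gg_sums:
  assumes u: "0 \<le> u" "u < 1 / Mx r"
  shows "gg r u sums (u * PS r u)"
proof -
  have "(\<lambda>k. u * (cc r k * u^k)) sums (u * PS r u)"
    unfolding PS_def by (intro sums_mult summable_sums summable_cc[OF u])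
  moreover have "gg r u = (\<lambda>k. u * (cc r k * u^k))" by (rule ext) (simp add: gg_cc)
  ultimately show ?thesis by simp
qed

lemma gg_summable:
  assumes u: "0 \<le> u" "u < 1 / Mx r"
  shows "summable (gg r u)"
  using gg_sums[OF u] by (rule sums_summable)

lemma isCont_S:
  assumes x: "0 \<le> x" "x < 1 / Mx r"
  shows "isCont (\<lambda>u. u * PS r u) x"
proof -
  define K where "K = (x + 1 / Mx r) / 2"
  have K: "0 \<le> K" "K < 1 / Mx r" "x < K" using x by (auto simp: K_def)
  have "isCont (\<lambda>u. \<Sum>k. cc r k * u^k) x"
    using K x by (intro isCont_powser[OF summable_cc[OF K(1,2)]]) auto
  then show ?thesis unfolding PS_def by (intro continuous_intros)
qed

lemma suminf_gg_a: "(\<Sum>k. gg r (a / Mx r) k) \<le> ss"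
proof -
  have "(\<Sum>k. gg r (a / Mx r) k) \<le> (\<Sum>k. real (delta a 0 k) * a^(k+1))"
    using gg_le_a[OF r] kinf aMx_pos[of r] aMx_lt[of r]
    by (intro suminf_le gg_summable summable_a) (auto simp: less_imp_le)
  also have "\<dots> \<le> ss" using suminf_a_inf[OF kinf] .
  finally show ?thesis .
qed

lemma exists_inf: "\<exists>u. a / Mx r \<le> u \<and> u < 1 / Mx r \<and> gg r u sums 1"
proof -
  obtain F where F: "finite F" "F \<subseteq> Ones" "1 < (\<Sum>k\<in>F. gg r (1 / Mx r) k)" using LB[OF r] by blast
  define Q where "Q u = (\<Sum>k\<in>F. gg r u k)" for u
  have cQ: "isCont Q (1 / Mx r)" unfolding Q_def gg_def by (intro continuous_intros)
  have "0 < Q (1 / Mx r) - 1" using F by (simp add: Q_def)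
  then obtain d where d: "0 < d" "\<And>x'. dist x' (1 / Mx r) < d \<Longrightarrow> dist (Q x') (Q (1 / Mx r)) < Q (1 / Mx r) - 1"
    using cQ unfolding continuous_at_eps_delta by blast
  define u2 where "u2 = max (a / Mx r) (1 / Mx r - d/2)"
  have u2: "a / Mx r \<le> u2" "u2 < 1 / Mx r" using aMx_lt[of r] d by (auto simp: u2_def)
  have "dist u2 (1 / Mx r) < d" using u2 d by (auto simp: u2_def dist_real_def)
  then have "dist (Q u2) (Q (1 / Mx r)) < Q (1 / Mx r) - 1" using d by blast
  then have Qu2: "1 < Q u2" by (simp add: dist_real_def abs_if split: if_splits)
  have u2pos: "0 \<le> u2" using u2 aMx_pos[of r] by simp
  have "Q u2 \<le> (\<Sum>k. gg r u2 k)" unfolding Q_def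
    using F u2pos r by (intro sum_le_suminf gg_summable u2 gg_nonneg) auto
  also have "\<dots> = u2 * PS r u2" using gg_sums[OF u2pos u2(2)] by (simp add: sums_iff)
  finally have hi: "1 \<le> u2 * PS r u2" using Qu2 by simp
  have "a / Mx r * PS r (a / Mx r) = (\<Sum>k. gg r (a / Mx r) k)"
    using gg_sums[of "a / Mx r"] aMx_pos[of r] aMx_lt[of r] by (simp add: sums_iff)
  also have "\<dots> \<le> 1" using suminf_gg_a ss_le1 by simp
  finally have lo: "a / Mx r * PS r (a / Mx r) \<le> 1" .
  have cont: "continuous_on {a / Mx r .. u2} (\<lambda>u. u * PS r u)"
  proof (intro continuous_at_imp_continuous_on ballI)
    fix x assume "x \<in> {a / Mx r .. u2}"
    then show "isCont (\<lambda>u. u * PS r u) x" using u2 aMx_pos[of r] by (intro isCont_S) auto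
  qed
  obtain u where u: "a / Mx r \<le> u" "u \<le> u2" "u * PS r u = 1"
    using IVT'[of "\<lambda>u. u * PS r u", OF lo hi u2(1) cont] by blast
  have "gg r u sums 1" using gg_sums[of u] u u2 aMx_pos[of r] by auto
  then show ?thesis using u u2 by (intro exI[of _ u]) auto
qed

lemma strict_sum_less:
  fixes f g :: "nat \<Rightarrow> real"
  assumes "summable f" "summable g" "\<And>k. f k \<le> g k" "f i < g i"
  shows "suminf f < suminf g"
proof -
  have "0 < (\<Sum>k. g k - f k)" using assms by (intro suminf_pos2[of _ i] summable_diff) auto
  then show ?thesis using suminf_diff[OF assms(2,1)] by simp
qed

lemma unique_inf:
  assumes u1: "0 < u1" "gg r u1 sums 1" and u2: "0 < u2" "gg r u2 sums 1" and lt: "u1 < u2"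
  shows False
proof -
  have "suminf (gg r u1) < suminf (gg r u2)"
    using u1 u2 lt r by (intro strict_sum_less[of _ _ 0]) (auto simp: sums_iff gg0 intro: gg_mono)
  then show False using u1 u2 by (simp add: sums_iff)
qed

lemma bounds_inf:
  assumes u: "0 < u" "gg r u sums 1"
  shows "a / Mx r \<le> u \<and> u < 1 / Mx r \<and> (a < 2/3 \<or> r \<noteq> 1 \<longrightarrow> a / Mx r < u)"
proof -
  have su: "summable (gg r u)" and s1: "suminf (gg r u) = 1" using u by (auto simp: sums_iff)
  have ub: "u < 1 / Mx r"
  proof (rule ccontr)
    assume "\<not> u < 1 / Mx r"
    then have ge: "1 / Mx r \<le> u" by simp
    obtain F where F: "finite F" "F \<subseteq> Ones" "1 < (\<Sum>k\<in>F. gg r (1 / Mx r) k)" using LB[OF r] by blast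
    have "(\<Sum>k\<in>F. gg r (1 / Mx r) k) \<le> (\<Sum>k\<in>F. gg r u k)"
      using ge r Mx_pos[of r] by (intro sum_mono gg_mono) auto
    also have "\<dots> \<le> suminf (gg r u)" using su F u r by (intro sum_le_suminf gg_nonneg) auto
    finally show False using F s1 by simp
  qed
  have sa: "summable (gg r (a / Mx r))" using aMx_pos[of r] aMx_lt[of r] by (intro gg_summable) auto
  have lb: "a / Mx r \<le> u"
  proof (rule ccontr)
    assume "\<not> a / Mx r \<le> u"
    then have "u < a / Mx r" by simp
    then have "suminf (gg r u) < suminf (gg r (a / Mx r))"
      using su sa u r by (intro strict_sum_less[of _ _ 0]) (auto simp: gg0 intro: gg_mono)
    then show False using s1 suminf_gg_a ss_le1 by simp
  qed
  have strict: "a / Mx r < u" if h: "a < 2/3 \<or> r \<noteq> 1"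
  proof -
    have "suminf (gg r (a / Mx r)) < 1"
    proof (cases "a < 2/3")
      case True then show ?thesis using suminf_gg_a ss_lt1 by fastforce
    next
      case False
      then have r1: "r \<noteq> 1" using h by simp
      have "\<exists>i. gg r (a / Mx r) i < real (delta a 0 i) * a^(i+1)"
      proof (cases "1 < r")
        case True
        have "1 < r powr CC" using powr_less_mono[of 0 CC r] True CC_pos r by simp
        then have "1 < Mx r" by (simp add: Mx_def)
        then have "a / Mx r < a" using a_pos by (simp add: divide_less_eq)
        then show ?thesis using gg0[of r "a / Mx r"] delta00 by (intro exI[of _ 0]) simp
      next
        case False
        then have rl: "r < 1" using r1 by simp
        have "r powr CC \<le> 1" using rl r CC_pos by (intro powr_le1) auto
        then have M1: "Mx r = 1" by (simp add: Mx_def)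
        obtain k1 where k1: "k1 \<in> Ones" "0 < k1" using exists_one by blast
        have d1: "delta a 0 k1 = 1" using k1 by (simp add: Ones_def)
        obtain m where m: "Lcount a 0 k1 = Suc m" using L0_ge1[OF k1(2)] by (cases "Lcount a 0 k1") auto
        have "r^(Lcount a 0 k1) < 1" using m rl r by (simp add: power_Suc_less_one del: power_Suc)
        then have "a^(k1+1) * r^(Lcount a 0 k1) < a^(k1+1) * 1"
          using a_pos by (intro mult_strict_left_mono) auto
        then show ?thesis using M1 d1 by (intro exI[of _ k1]) (simp add: gg_def)
      qed
      then obtain i where i: "gg r (a / Mx r) i < real (delta a 0 i) * a^(i+1)" by blast
      have "suminf (gg r (a / Mx r)) < (\<Sum>k. real (delta a 0 k) * a^(k+1))"
        using sa summable_a gg_le_a[OF r] kinf i by (intro strict_sum_less[of _ _ i]) auto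
      also have "\<dots> \<le> 1" using suminf_a_inf[OF kinf] ss_le1 by simp
      finally show ?thesis .
    qed
    then show ?thesis using lb s1 by (cases "a / Mx r = u") auto
  qed
  show ?thesis using ub lb strict by blast
qed

end

end

context tm
begin

context
  fixes r :: real and K :: nat
  assumes r: "0 < r" and kfin: "kappa a 0 = enat K"
begin

lemma P_a: "(\<Sum>k\<le>K. gg r (a / Mx r) k) < 1"
proof -
  have "(\<Sum>k\<le>K. gg r (a / Mx r) k) \<le> (\<Sum>k\<le>K. real (delta a 0 k) * a^(k+1))"
    using kfin by (intro sum_mono gg_le_a[OF r]) auto
  also have "\<dots> < 1" by (rule sum_a_fin[OF kfin])
  finally show ?thesis .
qed

lemma P_1: "1 < (\<Sum>k\<le>K. gg r (1 / Mx r) k)"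
proof -
  obtain F where F: "finite F" "F \<subseteq> Ones" "1 < (\<Sum>k\<in>F. gg r (1 / Mx r) k)" using LB[OF r] by blast
  have "F \<subseteq> {..K}" using F(2) kfin by (auto simp: Ones_def)
  then have "(\<Sum>k\<in>F. gg r (1 / Mx r) k) \<le> (\<Sum>k\<le>K. gg r (1 / Mx r) k)"
    using r Mx_pos[of r] by (intro sum_mono2 gg_nonneg) auto
  then show ?thesis using F by simp
qed

lemma exists_fin: "\<exists>u. a / Mx r \<le> u \<and> u < 1 / Mx r \<and> (\<Sum>k\<le>K. gg r u k) = 1"
proof -
  have cont: "continuous_on {a / Mx r .. 1 / Mx r} (\<lambda>u. \<Sum>k\<le>K. gg r u k)"
    unfolding gg_def by (intro continuous_intros)
  obtain u where u: "a / Mx r \<le> u" "u \<le> 1 / Mx r" "(\<Sum>k\<le>K. gg r u k) = 1"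
    using IVT'[of "\<lambda>u. \<Sum>k\<le>K. gg r u k", OF less_imp_le[OF P_a] less_imp_le[OF P_1]
        less_imp_le[OF aMx_lt] cont] by blast
  have "u \<noteq> 1 / Mx r" using u P_1 by auto
  then show ?thesis using u by (intro exI[of _ u]) auto
qed

lemma unique_fin:
  assumes "0 < u1" "0 < u2" "u1 < u2" "(\<Sum>k\<le>K. gg r u1 k) = 1" "(\<Sum>k\<le>K. gg r u2 k) = 1"
  shows False
proof -
  have "(\<Sum>k\<le>K. gg r u1 k) < (\<Sum>k\<le>K. gg r u2 k)"
    using assms r by (intro sum_strict_mono_ex1) (auto intro!: gg_mono bexI[of _ 0] simp: gg0)
  then show False using assms by simp
qed

lemma bounds_fin:
  assumes u: "0 < u" "(\<Sum>k\<le>K. gg r u k) = 1"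
  shows "a / Mx r < u \<and> u < 1 / Mx r"
proof
  show "a / Mx r < u"
  proof (rule ccontr)
    assume "\<not> a / Mx r < u"
    then have "(\<Sum>k\<le>K. gg r u k) \<le> (\<Sum>k\<le>K. gg r (a / Mx r) k)"
      using u r by (intro sum_mono gg_mono) auto
    then show False using P_a u by simp
  qed
  show "u < 1 / Mx r"
  proof (rule ccontr)
    assume "\<not> u < 1 / Mx r"
    then have "(\<Sum>k\<le>K. gg r (1 / Mx r) k) \<le> (\<Sum>k\<le>K. gg r u k)"
      using u r Mx_pos[of r] by (intro sum_mono gg_mono) auto
    then show False using P_1 u by simp
  qed
qed

end

lemma sol_exists: "0 < r \<Longrightarrow> \<exists>u. 0 < u \<and> sol r u"
proof (cases "kappa a 0")
  case (enat K)
  assume r: "0 < r"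
  obtain u where "a / Mx r \<le> u" "(\<Sum>k\<le>K. gg r u k) = 1" using exists_fin[OF r enat] by blast
  then show ?thesis using aMx_pos[of r] enat by (intro exI[of _ u]) (auto simp: sol_def)
next
  case infinity
  assume r: "0 < r"
  obtain u where "a / Mx r \<le> u" "gg r u sums 1" using exists_inf[OF r infinity] by blast
  then show ?thesis using aMx_pos[of r] infinity by (intro exI[of _ u]) (auto simp: sol_def)
qed

lemma sol_unique_lt: "0 < r \<Longrightarrow> 0 < u1 \<Longrightarrow> 0 < u2 \<Longrightarrow> u1 < u2 \<Longrightarrow> sol r u1 \<Longrightarrow> sol r u2 \<Longrightarrow> False"
proof (cases "kappa a 0")
  case (enat K)
  then show "0 < r \<Longrightarrow> 0 < u1 \<Longrightarrow> 0 < u2 \<Longrightarrow> u1 < u2 \<Longrightarrow> sol r u1 \<Longrightarrow> sol r u2 \<Longrightarrow> False"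
    using unique_fin[of r K u1 u2] by (simp add: sol_def)
next
  case infinity
  then show "0 < r \<Longrightarrow> 0 < u1 \<Longrightarrow> 0 < u2 \<Longrightarrow> u1 < u2 \<Longrightarrow> sol r u1 \<Longrightarrow> sol r u2 \<Longrightarrow> False"
    using unique_inf[of r u1 u2] by (simp add: sol_def)
qed

lemma sol_unique: "0 < r \<Longrightarrow> 0 < u1 \<Longrightarrow> 0 < u2 \<Longrightarrow> sol r u1 \<Longrightarrow> sol r u2 \<Longrightarrow> u1 = u2"
  using sol_unique_lt[of r u1 u2] sol_unique_lt[of r u2 u1] by (cases u1 u2 rule: linorder_cases) auto

lemma sol_bounds: "0 < r \<Longrightarrow> 0 < u \<Longrightarrow> sol r u \<Longrightarrow>
   a / Mx r \<le> u \<and> u < 1 / Mx r \<and> (a < 2/3 \<or> r \<noteq> 1 \<longrightarrow> a / Mx r < u)"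
proof (cases "kappa a 0")
  case (enat K)
  then show "0 < r \<Longrightarrow> 0 < u \<Longrightarrow> sol r u \<Longrightarrow> ?thesis"
    using bounds_fin[of r K u] by (auto simp: sol_def)
next
  case infinity
  then show "0 < r \<Longrightarrow> 0 < u \<Longrightarrow> sol r u \<Longrightarrow> ?thesis"
    using bounds_inf[of r u] by (auto simp: sol_def)
qed

lemma lam_eqn_sol: "lam_eqn a p lam \<longleftrightarrow> sol ((1-p)/p) (p/lam)"
proof -
  have eq: "lam_term a p lam = gg ((1-p)/p) (p/lam)" by (rule ext) (simp add: lam_term_def gg_def)
  show ?thesis unfolding lam_eqn_def sol_def eq ..
qed

lemma window:
  assumes "0 \<le> x" "k \<le> n" "enat n \<le> kappa a x"
  shows "real (Lcount a x n) - real (Lcount a x k) \<le> CC * (real n - real k + 1) + 1"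
proof -
  have v: "valid x n" using kappa_valid assms by simp
  have v2: "valid (orb x k) (n - k)" using valid_shift[OF v assms(2)] .
  have "Lcount a x n = Lcount a x (k + (n - k))" using assms by simp
  also have "\<dots> = Lcount a x k + Lcount a (orb x k) (n - k)" by (rule L_add)
  finally have e: "Lcount a x n = Lcount a x k + Lcount a (orb x k) (n - k)" .
  have "real (Lcount a (orb x k) (n - k)) \<le> CC * (real (n - k) + 1) + 1"
    using key[of CC "orb x k" "n - k"] L_le_CC CC_pos v2 by auto
  then show ?thesis using e assms(2) by (simp add: of_nat_diff)
qed

end

theorem proposition3p1:
  fixes a :: real
  assumes "1/2 < a" and "a \<le> 2/3"
  shows "(\<forall>p. 0 < p \<and> p < 1 \<longrightarrow> (\<exists>!lam. 0 < lam \<and> lam_eqn a p lam)) \<and>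
         (\<exists>C::real. C > 0 \<and>
            (\<forall>p lam. 0 < p \<and> p < 1 \<and> 0 < lam \<and> lam_eqn a p lam \<longrightarrow>
               p / a * max 1 (((1 - p) / p) powr C) \<ge> lam \<and>
               lam > p * max 1 (((1 - p) / p) powr C) \<and>
               (\<not> (a = 2/3 \<and> p = 1/2) \<longrightarrow> p / a * max 1 (((1 - p) / p) powr C) > lam)) \<and>
            (\<forall>x k n. 0 \<le> x \<and> x \<le> 1 / (1 - a) \<and> k \<le> n \<and> enat n \<le> kappa a x \<longrightarrow>
               real (Lcount a x n) - real (Lcount a x k) \<le> C * (real n - real k + 1) + 1))"
proof -
  interpret tm a using assms by unfold_locales
  have P1: "\<exists>!lam. 0 < lam \<and> lam_eqn a p lam" if p: "0 < p" "p < 1" for p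
  proof -
    define r where "r = (1-p)/p"
    have r: "0 < r" using p by (simp add: r_def)
    obtain u where u: "0 < u" "sol r u" using sol_exists[OF r] by blast
    have pu: "p / (p / u) = u" using p u by simp
    show ?thesis
    proof (rule ex1I[of _ "p/u"])
      have "sol r (p / (p/u))" using u(2) pu by simp
      then have "lam_eqn a p (p/u)" unfolding lam_eqn_sol r_def .
      then show "0 < p/u \<and> lam_eqn a p (p/u)" using u p by simp
    next
      fix lam assume l: "0 < lam \<and> lam_eqn a p lam"
      then have s: "sol r (p/lam)" unfolding lam_eqn_sol r_def by simp
      have "0 < p/lam" using l p by simp
      then have "p/lam = u" using sol_unique[OF r _ u(1) s u(2)] by blast
      then show "lam = p/u" using l p u by (auto simp: field_simps)
    qed
  qed
  have P2: "p / a * Mx ((1-p)/p) \<ge> lam \<and> lam > p * Mx ((1-p)/p) \<and>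
            (\<not> (a = 2/3 \<and> p = 1/2) \<longrightarrow> p / a * Mx ((1-p)/p) > lam)"
    if h: "0 < p" "p < 1" "0 < lam" "lam_eqn a p lam" for p lam
  proof -
    define r where "r = (1-p)/p"
    have r: "0 < r" using h by (simp add: r_def)
    have s: "sol r (p/lam)" using h(4) unfolding lam_eqn_sol r_def .
    have u: "0 < p/lam" using h by simp
    have B: "a / Mx r \<le> p/lam" "p/lam < 1 / Mx r" "a < 2/3 \<or> r \<noteq> 1 \<longrightarrow> a / Mx r < p/lam"
      using sol_bounds[OF r u s] by auto
    have M: "0 < Mx r" by (rule Mx_pos)
    have 1: "lam \<le> p / a * Mx r" using B(1) M h a_pos by (simp add: field_simps)
    have 2: "p * Mx r < lam" using B(2) M h by (simp add: field_simps)
    have 3: "lam < p / a * Mx r" if "\<not> (a = 2/3 \<and> p = 1/2)"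
    proof -
      have "a < 2/3 \<or> r \<noteq> 1"
      proof (cases "a < 2/3")
        case False
        then have "p \<noteq> 1/2" using that assms by auto
        then have "r \<noteq> 1" using h by (simp add: r_def field_simps)
        then show ?thesis by simp
      qed simp
      then have "a / Mx r < p/lam" using B(3) by simp
      then show ?thesis using M h a_pos by (simp add: field_simps)
    qed
    show ?thesis using 1 2 3 by (simp add: r_def)
  qed
  show ?thesis
  proof (intro conjI allI impI exI[of _ CC])
    show "0 < CC" by (rule CC_pos)
  next
    fix p :: real assume "0 < p \<and> p < 1"
    then show "\<exists>!lam. 0 < lam \<and> lam_eqn a p lam" using P1 by blast
  next
    fix p lam :: real assume "0 < p \<and> p < 1 \<and> 0 < lam \<and> lam_eqn a p lam"
    then show "p / a * max 1 (((1 - p) / p) powr CC) \<ge> lam" using P2[of p lam] by (simp add: Mx_def)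
  next
    fix p lam :: real assume "0 < p \<and> p < 1 \<and> 0 < lam \<and> lam_eqn a p lam"
    then show "lam > p * max 1 (((1 - p) / p) powr CC)" using P2[of p lam] by (simp add: Mx_def)
  next
    fix p lam :: real assume "0 < p \<and> p < 1 \<and> 0 < lam \<and> lam_eqn a p lam" "\<not> (a = 2/3 \<and> p = 1/2)"
    then show "p / a * max 1 (((1 - p) / p) powr CC) > lam" using P2[of p lam] by (simp add: Mx_def)
  next
    fix x :: real and k n :: nat assume "0 \<le> x \<and> x \<le> 1 / (1 - a) \<and> k \<le> n \<and> enat n \<le> kappa a x"
    then show "real (Lcount a x n) - real (Lcount a x k) \<le> CC * (real n - real k + 1) + 1"
      using window by auto
  qed
qed

end
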